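(* Assume $\delta\in(0,1]$. Consider a critical sequence of symmetric action profiles $(p,q)$ with $p>0$, and let $\omega(n)\to\infty$. Then for every firm $i$, $$\mathbb P\big[|I_i(\mathbf p,\mathbf q)|>\omega(n)\big]\to0\quad\text{as }n\to\infty.$$
   Context: Model (for each number of firms $n\ge 2$). There are $n$ firms $1,\dots,n$; firm $i$ can discover a single idea, also labelled $i$. A parameter $\delta\in[0,1]$ is fixed. All firms use the action $(p,q)\in[0,1)\times[0,1]$ (depending on $n$). Idea $i$ is discovered independently with probability $p$; $I$ is the random set of discovered ideas. The interaction rate is $\iota(q,q)=q^2$. For each ordered pair $i\neq j$, independently, $i$ learns directly from $j$ with probability $\iota(q,q)$, and conditional on this, independently with probability $\delta$, $i$ also learns indirectly through $j$. The indirect-learning network has an edge $j\to i$ whenever $i$ learns indirectly through $j$. $I_i(\mathbf p,\mathbf q)=\{j\in I\setminus\{i\}:$ some firm $m$, with $m=i$ or with a directed path from $m$ to $i$ in the indirect-learning network, learns directly from $j\}$. The sequence (indexed by $n\to\infty$) is critical if $\lim_n\delta\iota(q,q)n=1$. *)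

theory Defs
  imports Complex_Main
begin

text \<open>Firms and ideas are labelled 0,...,n-1. An outcome of the random experiment
  is a triple (I, D, N):
  I = set of discovered ideas;
  D = set of ordered pairs (i,j), i ~= j, such that firm i learns directly from j;
  N = subset of D of pairs (i,j) such that i also learns indirectly through j
      (this gives an edge j -> i of the indirect-learning network).\<close>

definition offdiag :: "nat \<Rightarrow> (nat \<times> nat) set" where
  "offdiag n = {(i,j). i < n \<and> j < n \<and> i \<noteq> j}"

definition outcomes :: "nat \<Rightarrow> (nat set \<times> (nat \<times> nat) set \<times> (nat \<times> nat) set) set" where
  "outcomes n = {(I,D,N). I \<subseteq> {..<n} \<and> D \<subseteq> offdiag n \<and> N \<subseteq> D}"

definition iota :: "real \<Rightarrow> real \<Rightarrow> real" where
  "iota q q' = q * q'"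

definition weight :: "nat \<Rightarrow> real \<Rightarrow> real \<Rightarrow> real \<Rightarrow>
    (nat set \<times> (nat \<times> nat) set \<times> (nat \<times> nat) set) \<Rightarrow> real" where
  "weight n p q \<delta> \<omega> = (case \<omega> of (I,D,N) \<Rightarrow>
      (\<Prod>j<n. if j \<in> I then p else 1 - p) *
      (\<Prod>e\<in>offdiag n. if e \<in> N then iota q q * \<delta>
                        else if e \<in> D then iota q q * (1 - \<delta>)
                        else 1 - iota q q))"

definition prob_event :: "nat \<Rightarrow> real \<Rightarrow> real \<Rightarrow> real \<Rightarrow>
    ((nat set \<times> (nat \<times> nat) set \<times> (nat \<times> nat) set) \<Rightarrow> bool) \<Rightarrow> real" where
  "prob_event n p q \<delta> E = (\<Sum>\<omega>\<in>{\<omega> \<in> outcomes n. E \<omega>}. weight n p q \<delta> \<omega>)"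

definition ind_net :: "(nat \<times> nat) set \<Rightarrow> (nat \<times> nat) set" where
  "ind_net N = {(j,i). (i,j) \<in> N}"

definition learned :: "nat \<Rightarrow> (nat set \<times> (nat \<times> nat) set \<times> (nat \<times> nat) set) \<Rightarrow> nat set" where
  "learned i \<omega> = (case \<omega> of (I,D,N) \<Rightarrow>
     {j \<in> I - {i}. \<exists>m. (m = i \<or> (m,i) \<in> (ind_net N)\<^sup>+) \<and> (m,j) \<in> D})"

end

theory Submission
  imports Defs "HOL-Library.FuncSet"
begin


lemma sum_PiE_filter:
  fixes w :: "'a \<Rightarrow> 'b \<Rightarrow> real"
  assumes fX: "finite X" and fS: "\<And>x. x \<in> X \<Longrightarrow> finite (S x)"
  shows "(\<Sum>f\<in>PiE X S. (\<Prod>x\<in>X. w x (f x)) * (if \<forall>x\<in>X. f x \<in> T x then 1 else 0))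
       = (\<Prod>x\<in>X. \<Sum>s\<in>S x \<inter> T x. w x s)"
proof -
  have fin: "finite (PiE X S)" using fX fS by (intro finite_PiE) auto
  have "(\<Sum>f\<in>PiE X S. (\<Prod>x\<in>X. w x (f x)) * (if \<forall>x\<in>X. f x \<in> T x then 1 else 0))
      = (\<Sum>f\<in>{f\<in>PiE X S. \<forall>x\<in>X. f x \<in> T x}. (\<Prod>x\<in>X. w x (f x)))"
    using fin by (simp add: sum.inter_filter if_distrib cong: if_cong)
  also have "{f\<in>PiE X S. \<forall>x\<in>X. f x \<in> T x} = PiE X (\<lambda>x. S x \<inter> T x)"
    by (auto simp: PiE_iff extensional_def)
  also have "(\<Sum>f\<in>PiE X (\<lambda>x. S x \<inter> T x). (\<Prod>x\<in>X. w x (f x))) = (\<Prod>x\<in>X. \<Sum>s\<in>S x \<inter> T x. w x s)"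
    using fX fS by (subst prod_sum_PiE) auto
  finally show ?thesis .
qed

lemma sum_PiE_map:
  fixes w :: "'a \<Rightarrow> 'b \<Rightarrow> real"
  assumes fX: "finite X" and fS: "\<And>x. x \<in> X \<Longrightarrow> finite (S x)"
  shows "(\<Sum>f\<in>PiE X S. (\<Prod>x\<in>X. w x (f x)) * F (\<lambda>x\<in>X. h x (f x)))
       = (\<Sum>g\<in>PiE X (\<lambda>x. h x ` S x). (\<Prod>x\<in>X. \<Sum>s\<in>{s\<in>S x. h x s = g x}. w x s) * F g)"
proof -
  define M where "M f = (\<lambda>x\<in>X. h x (f x))" for f :: "'a \<Rightarrow> 'b"
  have fin: "finite (PiE X S)" using fX fS by (intro finite_PiE) auto
  have finG: "finite (PiE X (\<lambda>x. h x ` S x))" using fX fS by (intro finite_PiE) auto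
  have sub: "M ` PiE X S \<subseteq> PiE X (\<lambda>x. h x ` S x)"
    by (auto simp: M_def PiE_iff)
  have "(\<Sum>f\<in>PiE X S. (\<Prod>x\<in>X. w x (f x)) * F (M f))
      = (\<Sum>g\<in>PiE X (\<lambda>x. h x ` S x). \<Sum>f\<in>{f. f \<in> PiE X S \<and> M f = g}. (\<Prod>x\<in>X. w x (f x)) * F (M f))"
    by (rule sum.group[OF fin finG sub, symmetric])
  also have "\<dots> = (\<Sum>g\<in>PiE X (\<lambda>x. h x ` S x). (\<Prod>x\<in>X. \<Sum>s\<in>{s\<in>S x. h x s = g x}. w x s) * F g)"
  proof (rule sum.cong[OF refl])
    fix g assume g: "g \<in> PiE X (\<lambda>x. h x ` S x)"
    have eq: "{f. f \<in> PiE X S \<and> M f = g} = PiE X (\<lambda>x. {s\<in>S x. h x s = g x})"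
    proof (intro set_eqI iffI)
      fix f assume "f \<in> {f. f \<in> PiE X S \<and> M f = g}"
      then show "f \<in> PiE X (\<lambda>x. {s\<in>S x. h x s = g x})"
        by (auto simp: PiE_iff M_def fun_eq_iff split: if_splits)
    next
      fix f assume f: "f \<in> PiE X (\<lambda>x. {s\<in>S x. h x s = g x})"
      have "M f = g" using f g by (auto simp: PiE_iff M_def fun_eq_iff extensional_def)
      with f show "f \<in> {f. f \<in> PiE X S \<and> M f = g}" by (auto simp: PiE_iff)
    qed
    have "(\<Sum>f\<in>{f. f \<in> PiE X S \<and> M f = g}. (\<Prod>x\<in>X. w x (f x)) * F (M f))
        = (\<Sum>f\<in>PiE X (\<lambda>x. {s\<in>S x. h x s = g x}). (\<Prod>x\<in>X. w x (f x))) * F g"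
      unfolding eq[symmetric] by (simp add: sum_distrib_right)
    also have "\<dots> = (\<Prod>x\<in>X. \<Sum>s\<in>{s\<in>S x. h x s = g x}. w x s) * F g"
      using fX fS by (subst prod_sum_PiE) auto
    finally show "(\<Sum>f\<in>{f. f \<in> PiE X S \<and> M f = g}. (\<Prod>x\<in>X. w x (f x)) * F (M f))
        = (\<Prod>x\<in>X. \<Sum>s\<in>{s\<in>S x. h x s = g x}. w x s) * F g" .
  qed
  finally show ?thesis unfolding M_def .
qed



definition S3 :: "nat set" where "S3 = {0,1,2}"
definition w3 :: "real \<Rightarrow> real \<Rightarrow> real \<Rightarrow> nat \<Rightarrow> real" where
  "w3 a b d s = (if s = 2 then a else if s = 1 then b else d)"
definition W3 :: "nat \<Rightarrow> real \<Rightarrow> real \<Rightarrow> real \<Rightarrow> (nat \<times> nat \<Rightarrow> nat) \<Rightarrow> real" where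
  "W3 n a b d f = (\<Prod>x\<in>offdiag n. w3 a b d (f x))"
definition Om :: "nat \<Rightarrow> (nat \<times> nat \<Rightarrow> nat) set" where
  "Om n = PiE (offdiag n) (\<lambda>_. S3)"
definition E3 :: "nat \<Rightarrow> real \<Rightarrow> real \<Rightarrow> real \<Rightarrow> ((nat \<times> nat \<Rightarrow> nat) \<Rightarrow> real) \<Rightarrow> real" where
  "E3 n a b d Z = (\<Sum>f\<in>Om n. W3 n a b d f * Z f)"
definition P3 :: "nat \<Rightarrow> real \<Rightarrow> real \<Rightarrow> real \<Rightarrow> ((nat \<times> nat \<Rightarrow> nat) \<Rightarrow> bool) \<Rightarrow> real" where
  "P3 n a b d E = E3 n a b d (\<lambda>f. if E f then 1 else 0)"
definition decN :: "nat \<Rightarrow> (nat \<times> nat \<Rightarrow> nat) \<Rightarrow> (nat \<times> nat) set" where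
  "decN n f = {x\<in>offdiag n. f x = 2}"
definition decD :: "nat \<Rightarrow> (nat \<times> nat \<Rightarrow> nat) \<Rightarrow> (nat \<times> nat) set" where
  "decD n f = {x\<in>offdiag n. f x \<noteq> 0}"

lemma finite_offdiag[simp]: "finite (offdiag n)"
  by (rule finite_subset[of _ "{..<n} \<times> {..<n}"]) (auto simp: offdiag_def)

lemma finite_Om[simp]: "finite (Om n)"
  unfolding Om_def S3_def by (intro finite_PiE) auto

lemma W3_nonneg: "0 \<le> a \<Longrightarrow> 0 \<le> b \<Longrightarrow> 0 \<le> d \<Longrightarrow> 0 \<le> W3 n a b d f"
  unfolding W3_def w3_def by (intro prod_nonneg) auto

lemma E3_mono:
  assumes "0 \<le> a" "0 \<le> b" "0 \<le> d" "\<And>f. f \<in> Om n \<Longrightarrow> Z f \<le> Z' f"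
  shows "E3 n a b d Z \<le> E3 n a b d Z'"
  unfolding E3_def using assms W3_nonneg[OF assms(1-3)]
  by (intro sum_mono mult_left_mono) auto

lemma E3_add: "E3 n a b d (\<lambda>f. Z f + Z' f) = E3 n a b d Z + E3 n a b d Z'"
  unfolding E3_def by (simp add: distrib_left sum.distrib)

lemma E3_cmult: "E3 n a b d (\<lambda>f. c * Z f) = c * E3 n a b d Z"
  unfolding E3_def by (simp add: sum_distrib_left mult_ac)

lemma E3_sum: "finite Y \<Longrightarrow> E3 n a b d (\<lambda>f. \<Sum>y\<in>Y. Z y f) = (\<Sum>y\<in>Y. E3 n a b d (Z y))"
  unfolding E3_def by (simp add: sum_distrib_left sum.swap[of _ "Om n"])

lemma P3_cong:
  assumes "\<And>f. f \<in> Om n \<Longrightarrow> E f = E' f"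
  shows "P3 n a b d E = P3 n a b d E'"
  unfolding P3_def E3_def using assms by (intro sum.cong refl) auto

lemma P3_mono:
  assumes "0 \<le> a" "0 \<le> b" "0 \<le> d" "\<And>f. f \<in> Om n \<Longrightarrow> E f \<Longrightarrow> E' f"
  shows "P3 n a b d E \<le> P3 n a b d E'"
  unfolding P3_def using assms by (intro E3_mono) auto

lemma P3_disj:
  assumes "0 \<le> a" "0 \<le> b" "0 \<le> d"
  shows "P3 n a b d (\<lambda>f. E f \<or> E' f) \<le> P3 n a b d E + P3 n a b d E'"
  unfolding P3_def E3_add[symmetric] using assms by (intro E3_mono) auto

lemma P3_prod:
  assumes "Y \<subseteq> offdiag n" "a + b + d = 1"
  shows "P3 n a b d (\<lambda>f. \<forall>x\<in>Y. f x \<in> T x) = (\<Prod>x\<in>Y. \<Sum>s\<in>S3 \<inter> T x. w3 a b d s)"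
proof -
  define T' where "T' x = (if x \<in> Y then T x else UNIV)" for x
  have "P3 n a b d (\<lambda>f. \<forall>x\<in>Y. f x \<in> T x)
     = (\<Sum>f\<in>PiE (offdiag n) (\<lambda>_. S3). (\<Prod>x\<in>offdiag n. w3 a b d (f x)) *
           (if \<forall>x\<in>offdiag n. f x \<in> T' x then 1 else 0))"
    unfolding P3_def E3_def Om_def W3_def T'_def using assms(1)
    by (intro sum.cong refl arg_cong2[where f="(*)"]) auto
  also have "\<dots> = (\<Prod>x\<in>offdiag n. \<Sum>s\<in>S3 \<inter> T' x. w3 a b d s)"
    by (rule sum_PiE_filter) (auto simp: S3_def)
  also have "\<dots> = (\<Prod>x\<in>Y. \<Sum>s\<in>S3 \<inter> T x. w3 a b d s) * (\<Prod>x\<in>offdiag n - Y. \<Sum>s\<in>S3 \<inter> T' x. w3 a b d s)"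
    using assms(1) prod.subset_diff[of Y "offdiag n" "\<lambda>x. \<Sum>s\<in>S3 \<inter> T' x. w3 a b d s"]
    by (simp add: T'_def mult.commute)
  also have "(\<Prod>x\<in>offdiag n - Y. \<Sum>s\<in>S3 \<inter> T' x. w3 a b d s) = 1"
    using assms(2) by (intro prod.neutral) (auto simp: T'_def S3_def w3_def)
  finally show ?thesis by simp
qed

lemma P3_True: "a + b + d = 1 \<Longrightarrow> P3 n a b d (\<lambda>f. True) = 1"
  using P3_prod[of "{}" n a b d "\<lambda>_. UNIV"] by simp

lemma P3_not: "a + b + d = 1 \<Longrightarrow> P3 n a b d (\<lambda>f. \<not> E f) = 1 - P3 n a b d E"
proof -
  assume h: "a + b + d = 1"
  have "P3 n a b d (\<lambda>f. \<not> E f) + P3 n a b d E = P3 n a b d (\<lambda>f. True)"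
    unfolding P3_def E3_add[symmetric] by (rule arg_cong[where f="E3 n a b d"]) auto
  then show ?thesis using P3_True[OF h] by simp
qed

lemma P3_markov:
  assumes "0 \<le> a" "0 \<le> b" "0 \<le> d" "t > 0" "\<And>f. f \<in> Om n \<Longrightarrow> 0 \<le> Z f"
  shows "P3 n a b d (\<lambda>f. t \<le> Z f) \<le> E3 n a b d Z / t"
proof -
  have "t * P3 n a b d (\<lambda>f. t \<le> Z f) = E3 n a b d (\<lambda>f. t * (if t \<le> Z f then 1 else 0))"
    unfolding P3_def E3_cmult ..
  also have "\<dots> \<le> E3 n a b d Z"
    using assms by (intro E3_mono) auto
  finally show ?thesis using assms(4) by (simp add: field_simps mult.commute)
qed

lemma E3_card:
  "finite Y \<Longrightarrow> E3 n a b d (\<lambda>f. real (card {y\<in>Y. R f y})) = (\<Sum>y\<in>Y. P3 n a b d (\<lambda>f. R f y))"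
proof -
  assume fY: "finite Y"
  have "(\<lambda>f. real (card {y\<in>Y. R f y})) = (\<lambda>f. \<Sum>y\<in>Y. if R f y then 1 else 0)"
    using fY by (simp add: sum.inter_filter[symmetric])
  then show ?thesis unfolding P3_def using E3_sum[OF fY] by simp
qed



lemma finite_outcomes[simp]: "finite (outcomes n)"
proof -
  have "outcomes n \<subseteq> Pow {..<n} \<times> Pow (offdiag n) \<times> Pow (offdiag n)"
    by (auto simp: outcomes_def)
  then show ?thesis by (rule finite_subset) auto
qed

lemma weight_nonneg:
  assumes "0 \<le> p" "p \<le> 1" "0 \<le> q" "q \<le> 1" "0 \<le> \<delta>" "\<delta> \<le> 1"
  shows "0 \<le> weight n p q \<delta> \<omega>"
proof -
  have "q * q \<le> 1" using assms by (simp add: mult_le_one)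
  then show ?thesis using assms unfolding weight_def iota_def
    by (auto split: prod.splits intro!: mult_nonneg_nonneg prod_nonneg)
qed

lemma prob_event_mono:
  assumes "0 \<le> p" "p \<le> 1" "0 \<le> q" "q \<le> 1" "0 \<le> \<delta>" "\<delta> \<le> 1"
    and "\<And>\<omega>. \<omega> \<in> outcomes n \<Longrightarrow> E \<omega> \<Longrightarrow> E' \<omega>"
  shows "prob_event n p q \<delta> E \<le> prob_event n p q \<delta> E'"
  unfolding prob_event_def using assms weight_nonneg[OF assms(1-6)]
  by (intro sum_mono2) auto

lemma sum_wI: "(\<Sum>I\<in>Pow {..<n::nat}. \<Prod>j<n. if j \<in> I then p else 1 - p) = (1::real)"
proof -
  have "(\<Sum>I\<in>Pow {..<n}. \<Prod>j<n. if j \<in> I then p else 1 - p)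
      = (\<Sum>I\<in>Pow {..<n}. (\<Prod>j\<in>I. p) * (\<Prod>j\<in>{..<n} - I. 1 - p))"
  proof (rule sum.cong[OF refl])
    fix I assume "I \<in> Pow {..<n}"
    then have "{..<n} \<inter> {x. x \<in> I} = I" "{..<n} \<inter> - {x. x \<in> I} = {..<n} - I" by auto
    moreover have "(\<Prod>j<n. if j \<in> I then p else 1 - p) = prod (\<lambda>_. p) ({..<n} \<inter> {x. x \<in> I}) * prod (\<lambda>_. 1 - p) ({..<n} \<inter> - {x. x \<in> I})"
      by (rule prod.If_cases) (rule finite_lessThan)
    ultimately show "(\<Prod>j<n. if j \<in> I then p else 1 - p) = (\<Prod>j\<in>I. p) * (\<Prod>j\<in>{..<n} - I. 1 - p)"
      by simp
  qed
  also have "\<dots> = (\<Prod>j<n. p + (1 - p))"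
    by (rule prod_add[symmetric]) auto
  finally show ?thesis by simp
qed

lemma prob_event_enc:
  shows "prob_event n p q \<delta> (\<lambda>\<omega>. E (fst (snd \<omega>)) (snd (snd \<omega>)))
       = P3 n (q*q*\<delta>) (q*q*(1-\<delta>)) (1-q*q) (\<lambda>f. E (decD n f) (decN n f))"
proof -
  define X where "X = offdiag n"
  define \<phi> where "\<phi> = (\<lambda>(I::nat set, f::nat\<times>nat\<Rightarrow>nat). (I, decD n f, decN n f))"
  define F where "F = {f\<in>Om n. E (decD n f) (decN n f)}"
  define wI where "wI I = (\<Prod>j<n. if j \<in> I then p else 1 - p)" for I :: "nat set"
  have img: "{\<omega>\<in>outcomes n. E (fst (snd \<omega>)) (snd (snd \<omega>))} = \<phi> ` (Pow {..<n} \<times> F)"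
  proof (intro set_eqI iffI)
    fix \<omega> assume "\<omega> \<in> {\<omega>\<in>outcomes n. E (fst (snd \<omega>)) (snd (snd \<omega>))}"
    then obtain I D N where w: "\<omega> = (I,D,N)" "I \<subseteq> {..<n}" "D \<subseteq> X" "N \<subseteq> D" "E D N"
      by (auto simp: outcomes_def X_def)
    define f where "f = (\<lambda>x\<in>X. if x \<in> N then 2 else if x \<in> D then 1 else (0::nat))"
    have f1: "f \<in> Om n" by (auto simp: f_def Om_def X_def S3_def)
    have f2: "decD n f = D" "decN n f = N" using w by (auto simp: f_def decD_def decN_def X_def)
    show "\<omega> \<in> \<phi> ` (Pow {..<n} \<times> F)"
      using w f1 f2 by (auto simp: \<phi>_def F_def image_iff intro!: exI[of _ f])
  next
    fix \<omega> assume "\<omega> \<in> \<phi> ` (Pow {..<n} \<times> F)"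
    then show "\<omega> \<in> {\<omega>\<in>outcomes n. E (fst (snd \<omega>)) (snd (snd \<omega>))}"
      by (auto simp: \<phi>_def F_def outcomes_def decD_def decN_def)
  qed
  have inj: "inj_on \<phi> (Pow {..<n} \<times> F)"
  proof (rule inj_onI)
    fix u v assume u: "u \<in> Pow {..<n} \<times> F" and v: "v \<in> Pow {..<n} \<times> F" and e: "\<phi> u = \<phi> v"
    obtain I f where u': "u = (I,f)" by (cases u)
    obtain I' g where v': "v = (I',g)" by (cases v)
    have fg: "f \<in> Om n" "g \<in> Om n" using u v u' v' by (auto simp: F_def)
    have eq: "I = I'" "decD n f = decD n g" "decN n f = decN n g" using e u' v' by (auto simp: \<phi>_def)
    have "f = g"
    proof (rule PiE_ext[OF fg[unfolded Om_def]])
      fix x assume x: "x \<in> offdiag n"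
      have "f x \<in> S3" "g x \<in> S3" using fg x by (auto simp: Om_def)
      moreover have "f x = 2 \<longleftrightarrow> g x = 2" using eq(3) x unfolding decN_def by blast
      moreover have "f x \<noteq> 0 \<longleftrightarrow> g x \<noteq> 0" using eq(2) x unfolding decD_def by blast
      ultimately show "f x = g x" by (auto simp: S3_def)
    qed
    then show "u = v" using u' v' eq by simp
  qed
  have wt: "weight n p q \<delta> (\<phi> (I,f)) = wI I * W3 n (q*q*\<delta>) (q*q*(1-\<delta>)) (1-q*q) f"
    if "f \<in> Om n" for I f
  proof -
    have "(\<Prod>e\<in>offdiag n. if e \<in> decN n f then iota q q * \<delta>
                        else if e \<in> decD n f then iota q q * (1 - \<delta>) else 1 - iota q q)
        = W3 n (q*q*\<delta>) (q*q*(1-\<delta>)) (1-q*q) f"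
      unfolding W3_def
    proof (rule prod.cong[OF refl])
      fix x assume x: "x \<in> offdiag n"
      then have "f x \<in> S3" using that by (auto simp: Om_def)
      then show "(if x \<in> decN n f then iota q q * \<delta> else if x \<in> decD n f then iota q q * (1 - \<delta>) else 1 - iota q q)
           = w3 (q*q*\<delta>) (q*q*(1-\<delta>)) (1-q*q) (f x)"
        using x by (auto simp: decN_def decD_def w3_def iota_def S3_def)
    qed
    then show ?thesis by (simp add: weight_def \<phi>_def wI_def)
  qed
  have "prob_event n p q \<delta> (\<lambda>\<omega>. E (fst (snd \<omega>)) (snd (snd \<omega>)))
      = (\<Sum>u\<in>Pow {..<n} \<times> F. weight n p q \<delta> (\<phi> u))"
    unfolding prob_event_def img by (rule sum.reindex[OF inj, unfolded comp_def])
  also have "\<dots> = (\<Sum>(I,f)\<in>Pow {..<n} \<times> F. wI I * W3 n (q*q*\<delta>) (q*q*(1-\<delta>)) (1-q*q) f)"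
    by (intro sum.cong refl) (auto simp: wt F_def)
  also have "\<dots> = (\<Sum>I\<in>Pow {..<n}. \<Sum>f\<in>F. wI I * W3 n (q*q*\<delta>) (q*q*(1-\<delta>)) (1-q*q) f)"
    by (rule sum.cartesian_product[symmetric])
  also have "\<dots> = (\<Sum>I\<in>Pow {..<n}. wI I) * (\<Sum>f\<in>F. W3 n (q*q*\<delta>) (q*q*(1-\<delta>)) (1-q*q) f)"
    by (simp add: sum_product)
  also have "(\<Sum>I\<in>Pow {..<n}. wI I) = 1" unfolding wI_def by (rule sum_wI)
  also have "(\<Sum>f\<in>F. W3 n (q*q*\<delta>) (q*q*(1-\<delta>)) (1-q*q) f)
        = P3 n (q*q*\<delta>) (q*q*(1-\<delta>)) (1-q*q) (\<lambda>f. E (decD n f) (decN n f))"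
    unfolding P3_def E3_def F_def by (auto simp: sum.inter_filter intro!: sum.cong)
  finally show ?thesis by simp
qed



definition anc :: "nat \<Rightarrow> (nat \<times> nat) set \<Rightarrow> nat set" where
  "anc i N = {m. m = i \<or> (m,i) \<in> (ind_net N)\<^sup>+}"
definition epairs :: "nat list \<Rightarrow> (nat \<times> nat) set" where
  "epairs xs = set (zip (tl xs) xs)"

lemma epairs_simps[simp]:
  "epairs [] = {}" "epairs [x] = {}" "epairs (x#y#ys) = insert (y,x) (epairs (y#ys))"
  by (auto simp: epairs_def)

lemma ind_net_iff[simp]: "(a,b) \<in> ind_net N \<longleftrightarrow> (b,a) \<in> N"
  by (auto simp: ind_net_def)

lemma epairs_append: "epairs vs \<subseteq> epairs (us @ vs)"
proof (induction us)
  case Nil then show ?case by simp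
next
  case (Cons u us)
  then show ?case by (cases "us @ vs") auto
qed

lemma epairs_mem: "(u,v) \<in> epairs xs \<Longrightarrow> u \<in> set (tl xs) \<and> v \<in> set xs \<and> u \<in> set xs"
  unfolding epairs_def by (cases xs) (auto dest: set_zip_leftD set_zip_rightD)

lemma path_anc: "epairs xs \<subseteq> N \<Longrightarrow> xs \<noteq> [] \<Longrightarrow> last xs = i \<Longrightarrow> set xs \<subseteq> anc i N"
proof (induction xs rule: induct_list012)
  case 1 then show ?case by simp
next
  case (2 x) then show ?case by (simp add: anc_def)
next
  case (3 x y ys)
  then have IH: "set (y#ys) \<subseteq> anc i N" and e: "(y,x) \<in> N" by auto
  have "y \<in> anc i N" using IH by auto
  then have "y = i \<or> (y,i) \<in> (ind_net N)\<^sup>+" by (simp add: anc_def)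
  moreover have "(x,y) \<in> ind_net N" using e by simp
  ultimately have "(x,i) \<in> (ind_net N)\<^sup>+" by (metis r_into_trancl trancl_into_trancl2)
  then have "x \<in> anc i N" by (simp add: anc_def)
  with IH show ?case by simp
qed

lemma anc_path_aux:
  assumes "(m,i) \<in> (ind_net N)\<^sup>+"
  shows "\<exists>xs. distinct xs \<and> xs \<noteq> [] \<and> hd xs = m \<and> last xs = i \<and> epairs xs \<subseteq> N"
  using assms
proof (induction rule: converse_trancl_induct)
  case (base y)
  show ?case
  proof (cases "y = i")
    case True then show ?thesis by (intro exI[of _ "[i]"]) auto
  next
    case False then show ?thesis using base by (intro exI[of _ "[y,i]"]) auto
  qed
next
  case (step y z)
  then obtain xs where xs: "distinct xs" "xs \<noteq> []" "hd xs = z" "last xs = i" "epairs xs \<subseteq> N" by blast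
  show ?case
  proof (cases "y \<in> set xs")
    case True
    then obtain us vs where uv: "xs = us @ y # vs" by (meson split_list)
    have "epairs (y#vs) \<subseteq> N" using epairs_append[of "y#vs" us] xs(5) uv by auto
    moreover have "distinct (y#vs)" using xs(1) uv by auto
    moreover have "last (y#vs) = i" using xs(4) uv by simp
    ultimately show ?thesis by (intro exI[of _ "y#vs"]) auto
  next
    case False
    obtain w ws where xw: "xs = w # ws" using xs(2) by (cases xs) auto
    have "epairs (y#xs) \<subseteq> N" using xs step(1) xw by auto
    then show ?thesis using False xs xw by (intro exI[of _ "y#xs"]) auto
  qed
qed

lemma anc_path:
  assumes "m \<in> anc i N"
  shows "\<exists>xs. distinct xs \<and> xs \<noteq> [] \<and> hd xs = m \<and> last xs = i \<and> epairs xs \<subseteq> N"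
proof (cases "m = i")
  case True then show ?thesis by (intro exI[of _ "[i]"]) auto
next
  case False then show ?thesis using assms anc_path_aux unfolding anc_def by auto
qed

lemma i_in_anc[simp]: "i \<in> anc i N" by (simp add: anc_def)

lemma anc_sub_snd: "anc i N \<subseteq> insert i (snd ` N)"
proof
  fix m assume "m \<in> anc i N"
  then have "m = i \<or> (m,i) \<in> (ind_net N)\<^sup>+" by (simp add: anc_def)
  then show "m \<in> insert i (snd ` N)"
  proof
    assume "(m,i) \<in> (ind_net N)\<^sup>+"
    then obtain z where "(m,z) \<in> ind_net N" by (meson tranclD)
    then show ?thesis by force
  qed simp
qed

lemma finite_anc: "finite N \<Longrightarrow> finite (anc i N)"
  using anc_sub_snd by (meson finite_imageI finite_insert finite_subset)

lemma card_anc: "finite N \<Longrightarrow> card (anc i N) \<le> card N + 1"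
proof -
  assume f: "finite N"
  have "card (anc i N) \<le> card (insert i (snd ` N))"
    using anc_sub_snd f by (intro card_mono) auto
  also have "\<dots> \<le> card (snd ` N) + 1" using f by (simp add: card_insert_le_m1 card_insert_if)
  also have "\<dots> \<le> card N + 1" using f by (simp add: card_image_le)
  finally show ?thesis .
qed

lemma anc_offdiag: "N \<subseteq> offdiag n \<Longrightarrow> i < n \<Longrightarrow> anc i N \<subseteq> {..<n}"
proof
  fix x assume "N \<subseteq> offdiag n" "i < n" "x \<in> anc i N"
  then show "x \<in> {..<n}" using anc_sub_snd[of i N] by (force simp: offdiag_def)
qed

lemma card_epairs: "distinct xs \<Longrightarrow> card (epairs xs) = length xs - 1"
  unfolding epairs_def by (subst distinct_card) (auto intro: distinct_zipI1 distinct_tl)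

lemma epairs_offdiag: "distinct xs \<Longrightarrow> set xs \<subseteq> {..<n} \<Longrightarrow> epairs xs \<subseteq> offdiag n"
proof (induction xs rule: induct_list012)
  case (3 x y ys) then show ?case by (auto simp: offdiag_def)
qed auto

lemma hd_notin_epairs: "distinct xs \<Longrightarrow> (hd xs, j) \<notin> epairs xs"
  by (cases xs) (auto dest: epairs_mem)

lemma anc_mono: "N \<subseteq> N' \<Longrightarrow> anc i N \<subseteq> anc i N'"
proof -
  assume "N \<subseteq> N'"
  then have "ind_net N \<subseteq> ind_net N'" by (auto simp: ind_net_def)
  then show ?thesis unfolding anc_def using trancl_mono by blast
qed

lemma anc_local:
  "anc i N = S \<longleftrightarrow> anc i (N \<inter> {x. fst x \<in> S}) = S"
proof
  assume h: "anc i N = S"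
  show "anc i (N \<inter> {x. fst x \<in> S}) = S"
  proof
    have "N \<inter> {x. fst x \<in> S} \<subseteq> N" by blast
    from anc_mono[OF this, of i] show "anc i (N \<inter> {x. fst x \<in> S}) \<subseteq> S" unfolding h .
  next
    show "S \<subseteq> anc i (N \<inter> {x. fst x \<in> S})"
    proof
      fix m assume "m \<in> S"
      then obtain xs where xs: "distinct xs" "xs \<noteq> []" "hd xs = m" "last xs = i" "epairs xs \<subseteq> N"
        using anc_path[of m i N] h \<open>m \<in> S\<close> by auto
      have "set xs \<subseteq> S" using path_anc[OF xs(5) xs(2) xs(4)] h by simp
      have "epairs xs \<subseteq> N \<inter> {x. fst x \<in> S}"
      proof
        fix e assume e0: "e \<in> epairs xs"
        obtain u v where e: "e = (u,v)" by (cases e)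
        have "u \<in> set xs" using epairs_mem[of u v xs] e0 e by simp
        then have "fst e \<in> S" using e \<open>set xs \<subseteq> S\<close> by auto
        moreover have "e \<in> N" using e0 xs(5) by blast
        ultimately show "e \<in> N \<inter> {x. fst x \<in> S}" by blast
      qed
      then have "set xs \<subseteq> anc i (N \<inter> {x. fst x \<in> S})" by (rule path_anc[OF _ xs(2,4)])
      moreover have "m \<in> set xs" using xs(2,3) hd_in_set by blast
      ultimately show "m \<in> anc i (N \<inter> {x. fst x \<in> S})" by blast
    qed
  qed
next
  assume h: "anc i (N \<inter> {x. fst x \<in> S}) = S"
  have key: "y \<in> S" if "(y,i) \<in> (ind_net N)\<^sup>+" for y
    using that
  proof (induction rule: converse_trancl_induct)
    case (base y)
    have "i \<in> S" using h i_in_anc by metis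
    then have "(y,i) \<in> ind_net (N \<inter> {x. fst x \<in> S})" using base by auto
    then have "y \<in> anc i (N \<inter> {x. fst x \<in> S})" using r_into_trancl unfolding anc_def by blast
    then show ?case using h by simp
  next
    case (step y z)
    then have "(y,z) \<in> ind_net (N \<inter> {x. fst x \<in> S})" by auto
    moreover have "z \<in> anc i (N \<inter> {x. fst x \<in> S})" using step h by simp
    then have "z = i \<or> (z,i) \<in> (ind_net (N \<inter> {x. fst x \<in> S}))\<^sup>+" by (simp add: anc_def)
    ultimately have "(y,i) \<in> (ind_net (N \<inter> {x. fst x \<in> S}))\<^sup>+" by (metis r_into_trancl trancl_into_trancl2)
    then have "y \<in> anc i (N \<inter> {x. fst x \<in> S})" by (simp add: anc_def)
    then show ?case using h by simp
  qed
  have "anc i N \<subseteq> S"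
  proof
    fix m assume "m \<in> anc i N"
    then have "m = i \<or> (m,i) \<in> (ind_net N)\<^sup>+" by (simp add: anc_def)
    moreover have "i \<in> S" using h i_in_anc by metis
    ultimately show "m \<in> S" using key by blast
  qed
  moreover have "S \<subseteq> anc i N" using anc_mono[of "N \<inter> {x. fst x \<in> S}" N i] unfolding h by blast
  ultimately show "anc i N = S" by auto
qed



definition paths :: "nat \<Rightarrow> nat \<Rightarrow> nat \<Rightarrow> nat list set" where
  "paths n i L = {xs. distinct xs \<and> set xs \<subseteq> {..<n} \<and> xs \<noteq> [] \<and> last xs = i \<and> length xs \<le> L}"

lemma finite_paths[simp]: "finite (paths n i L)"
proof -
  have "paths n i L \<subseteq> {xs. set xs \<subseteq> {..<n} \<and> length xs \<le> L}" by (auto simp: paths_def)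
  then show ?thesis by (rule finite_subset) (rule finite_lists_length_le, simp)
qed

lemma sum_lists_len:
  fixes z :: real
  shows "(\<Sum>ys\<in>{ys. set ys \<subseteq> {..<n} \<and> length ys \<le> L}. z ^ length ys) = (\<Sum>l\<le>L. (real n * z) ^ l)"
proof -
  let ?Lst = "{ys. set ys \<subseteq> {..<n} \<and> length ys \<le> L}"
  have fin: "finite ?Lst" by (rule finite_lists_length_le) simp
  have "(\<Sum>ys\<in>?Lst. z ^ length ys) = (\<Sum>l\<in>{..L}. \<Sum>ys\<in>{ys. ys \<in> ?Lst \<and> length ys = l}. z ^ length ys)"
    by (rule sum.group[symmetric, OF fin]) auto
  also have "\<dots> = (\<Sum>l\<le>L. (real n * z) ^ l)"
  proof (rule sum.cong[OF refl])
    fix l assume l: "l \<in> {..L}"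
    have "{ys. ys \<in> ?Lst \<and> length ys = l} = {ys. set ys \<subseteq> {..<n} \<and> length ys = l}" using l by auto
    then have "(\<Sum>ys\<in>{ys. ys \<in> ?Lst \<and> length ys = l}. z ^ length ys)
        = real (card {ys. set ys \<subseteq> {..<n} \<and> length ys = l}) * z ^ l" by simp
    also have "\<dots> = (real n * z) ^ l" by (simp add: card_lists_length_eq power_mult_distrib)
    finally show "(\<Sum>ys\<in>{ys. ys \<in> ?Lst \<and> length ys = l}. z ^ length ys) = (real n * z) ^ l" .
  qed
  finally show ?thesis .
qed

lemma sum_paths_le:
  fixes z :: real
  assumes "0 \<le> z"
  shows "(\<Sum>xs\<in>paths n i L. z ^ (length xs - 1)) \<le> (\<Sum>l\<le>L. (real n * z) ^ l)"
proof -
  have inj: "inj_on butlast (paths n i L)"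
  proof (rule inj_onI)
    fix xs ys
    assume h: "xs \<in> paths n i L" "ys \<in> paths n i L" "butlast xs = butlast ys"
    have ne: "xs \<noteq> []" "ys \<noteq> []" "last xs = last ys" using h by (auto simp: paths_def)
    then show "xs = ys" using h(3) by (metis append_butlast_last_id)
  qed
  have sub: "butlast ` paths n i L \<subseteq> {ys. set ys \<subseteq> {..<n} \<and> length ys \<le> L}"
    by (auto simp: paths_def dest: in_set_butlastD)
  have "(\<Sum>xs\<in>paths n i L. z ^ (length xs - 1)) = (\<Sum>ys\<in>butlast ` paths n i L. z ^ length ys)"
    by (subst sum.reindex[OF inj]) auto
  also have "\<dots> \<le> (\<Sum>ys\<in>{ys. set ys \<subseteq> {..<n} \<and> length ys \<le> L}. z ^ length ys)"
    using assms sub by (intro sum_mono2) (auto intro: finite_lists_length_le)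
  also have "\<dots> = (\<Sum>l\<le>L. (real n * z) ^ l)" by (rule sum_lists_len)
  finally show ?thesis .
qed

lemma P3_path:
  assumes "xs \<in> paths n i L" "a + b + d = 1"
  shows "P3 n a b d (\<lambda>f. epairs xs \<subseteq> decN n f) = a ^ (length xs - 1)"
proof -
  have xs: "distinct xs" "set xs \<subseteq> {..<n}" using assms by (auto simp: paths_def)
  have sub: "epairs xs \<subseteq> offdiag n" using epairs_offdiag[OF xs] .
  have "P3 n a b d (\<lambda>f. epairs xs \<subseteq> decN n f) = P3 n a b d (\<lambda>f. \<forall>x\<in>epairs xs. f x \<in> {2})"
  proof (rule P3_cong)
    fix f show "(epairs xs \<subseteq> decN n f) = (\<forall>x\<in>epairs xs. f x \<in> {2})"
      using sub unfolding decN_def by blast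
  qed
  also have "\<dots> = (\<Prod>x\<in>epairs xs. \<Sum>s\<in>S3 \<inter> {2}. w3 a b d s)"
    by (rule P3_prod[OF sub assms(2)])
  also have "\<dots> = a ^ (length xs - 1)"
    using card_epairs[OF xs(1)] by (simp add: S3_def w3_def)
  finally show ?thesis .
qed

lemma P3_path_D:
  assumes "xs \<in> paths n i L" "a + b + d = 1" "0 \<le> a" "0 \<le> b" "0 \<le> d"
  shows "P3 n a b d (\<lambda>f. epairs xs \<subseteq> decN n f \<and> (hd xs, j) \<in> decD n f) \<le> a ^ (length xs - 1) * (a + b)"
proof -
  have xs: "distinct xs" "set xs \<subseteq> {..<n}" using assms by (auto simp: paths_def)
  have sub: "epairs xs \<subseteq> offdiag n" using epairs_offdiag[OF xs] .
  have nin: "(hd xs, j) \<notin> epairs xs" by (rule hd_notin_epairs[OF xs(1)])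
  show ?thesis
  proof (cases "(hd xs, j) \<in> offdiag n")
    case False
    have "P3 n a b d (\<lambda>f. epairs xs \<subseteq> decN n f \<and> (hd xs, j) \<in> decD n f) \<le> P3 n a b d (\<lambda>f. False)"
      using False assms(3-5) by (intro P3_mono) (auto simp: decD_def)
    also have "\<dots> = 0" by (simp add: P3_def E3_def)
    moreover have "0 \<le> a ^ (length xs - 1) * (a + b)" using assms(3,4) by simp
    ultimately show ?thesis by linarith
  next
    case True
    define Y where "Y = insert (hd xs, j) (epairs xs)"
    define T where "T x = (if x = (hd xs, j) then {1,2} else {2::nat})" for x
    have Ysub: "Y \<subseteq> offdiag n" using True sub by (auto simp: Y_def)
    have "P3 n a b d (\<lambda>f. epairs xs \<subseteq> decN n f \<and> (hd xs, j) \<in> decD n f) = P3 n a b d (\<lambda>f. \<forall>x\<in>Y. f x \<in> T x)"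
    proof (rule P3_cong)
      fix f assume f: "f \<in> Om n"
      have v: "f (hd xs, j) \<in> S3" using f True by (auto simp: Om_def)
      show "(epairs xs \<subseteq> decN n f \<and> (hd xs, j) \<in> decD n f) = (\<forall>x\<in>Y. f x \<in> T x)"
      proof -
        have "(epairs xs \<subseteq> decN n f) = (\<forall>x\<in>epairs xs. f x \<in> T x)"
          using sub nin unfolding decN_def T_def by auto
        moreover have "((hd xs, j) \<in> decD n f) = (f (hd xs, j) \<in> T (hd xs, j))"
          using True v unfolding decD_def T_def S3_def by auto
        ultimately show ?thesis unfolding Y_def by auto
      qed
    qed
    also have "\<dots> = (\<Prod>x\<in>Y. \<Sum>s\<in>S3 \<inter> T x. w3 a b d s)"
      by (rule P3_prod[OF Ysub assms(2)])
    also have "\<dots> = (a + b) * (\<Prod>x\<in>epairs xs. \<Sum>s\<in>S3 \<inter> T x. w3 a b d s)"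
      unfolding Y_def using nin by (subst prod.insert) (auto simp: T_def S3_def w3_def epairs_def)
    also have "(\<Prod>x\<in>epairs xs. \<Sum>s\<in>S3 \<inter> T x. w3 a b d s) = (\<Prod>x\<in>epairs xs. a)"
      using nin by (intro prod.cong refl) (auto simp: T_def S3_def w3_def)
    also have "\<dots> = a ^ (length xs - 1)" using card_epairs[OF xs(1)] by simp
    finally show ?thesis by (simp add: mult.commute)
  qed
qed



definition GS :: "nat \<Rightarrow> nat set \<Rightarrow> (nat \<times> nat \<Rightarrow> bool) set" where
  "GS n S = PiE (offdiag n) (\<lambda>x. if fst x \<in> S then UNIV else {False})"
definition vw :: "nat set \<Rightarrow> real \<Rightarrow> nat \<times> nat \<Rightarrow> bool \<Rightarrow> real" where
  "vw S r x t = (if fst x \<in> S then (if t then r else 1 - r) else (if t then 0 else 1))"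
definition QA :: "nat \<Rightarrow> nat \<Rightarrow> nat set \<Rightarrow> real \<Rightarrow> real" where
  "QA n i S r = (\<Sum>g\<in>GS n S. (\<Prod>x\<in>offdiag n. vw S r x (g x)) *
                   (if anc i {x\<in>offdiag n. g x} = S then 1 else 0))"

lemma A_map:
  assumes "a + b + d = 1"
  shows "P3 n a b d (\<lambda>f. anc i (decN n f) = S) = QA n i S a"
proof -
  define X where "X = offdiag n"
  define h where "h x s = (fst x \<in> S \<and> s = (2::nat))" for x :: "nat \<times> nat" and s
  define F where "F g = (if anc i {x\<in>X. g x} = S then 1 else (0::real))" for g
  have ev: "(if anc i (decN n f) = S then 1 else 0) = F (\<lambda>x\<in>X. h x (f x))" for f
  proof -
    have "{x\<in>X. (\<lambda>x\<in>X. h x (f x)) x} = decN n f \<inter> {x. fst x \<in> S}"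
      by (auto simp: X_def h_def decN_def)
    then show ?thesis unfolding F_def using anc_local[of i "decN n f" S] by simp
  qed
  have "P3 n a b d (\<lambda>f. anc i (decN n f) = S)
      = (\<Sum>f\<in>PiE X (\<lambda>_. S3). (\<Prod>x\<in>X. w3 a b d (f x)) * F (\<lambda>x\<in>X. h x (f x)))"
    unfolding P3_def E3_def Om_def W3_def X_def[symmetric] ev ..
  also have "\<dots> = (\<Sum>g\<in>PiE X (\<lambda>x. h x ` S3). (\<Prod>x\<in>X. \<Sum>s\<in>{s\<in>S3. h x s = g x}. w3 a b d s) * F g)"
    by (rule sum_PiE_map) (auto simp: X_def S3_def)
  also have "\<dots> = QA n i S a"
    unfolding QA_def GS_def X_def[symmetric] F_def
  proof (rule sum.cong)
    show "PiE X (\<lambda>x. h x ` S3) = PiE X (\<lambda>x. if fst x \<in> S then UNIV else {False})"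
      by (rule PiE_cong) (auto simp: h_def S3_def image_iff)
  next
    fix g assume "g \<in> PiE X (\<lambda>x. if fst x \<in> S then UNIV else {False})"
    have "(\<Sum>s\<in>{s\<in>S3. h x s = t}. w3 a b d s) = vw S a x t" for x t
    proof -
      have "{s\<in>S3. h x s = t} = (if fst x \<in> S then (if t then {2} else {0,1}) else (if t then {} else S3))"
        by (auto simp: S3_def h_def)
      then show ?thesis using assms by (simp add: vw_def S3_def w3_def)
    qed
    then show "(\<Prod>x\<in>X. \<Sum>s\<in>{s\<in>S3. h x s = g x}. w3 a b d s) * (if anc i {x\<in>X. g x} = S then 1 else 0)
        = (\<Prod>x\<in>X. vw S a x (g x)) * (if anc i {x\<in>X. g x} = S then 1 else 0)" by simp
  qed
  finally show ?thesis .
qed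

lemma term_formula:
  assumes g: "g \<in> GS n S"
  shows "(\<Prod>x\<in>offdiag n. vw S r x (g x))
       = r ^ card {x\<in>offdiag n. g x} * (1 - r) ^ card ({x\<in>offdiag n. fst x \<in> S} - {x\<in>offdiag n. g x})"
proof -
  define X where "X = offdiag n"
  define C where "C = {x\<in>X. fst x \<in> S}"
  define T where "T = {x\<in>X. g x}"
  have TC: "T \<subseteq> C" using g by (auto simp: T_def C_def GS_def X_def PiE_iff split: if_splits)
  have CX: "C \<subseteq> X" by (auto simp: C_def)
  have fX: "finite X" by (simp add: X_def)
  have fC: "finite C" using CX fX finite_subset by blast
  have "(\<Prod>x\<in>X. vw S r x (g x)) = (\<Prod>x\<in>C. vw S r x (g x)) * (\<Prod>x\<in>X - C. vw S r x (g x))"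
    using prod.subset_diff[OF CX fX] by (simp add: mult.commute)
  also have "(\<Prod>x\<in>X - C. vw S r x (g x)) = 1"
    using TC by (intro prod.neutral) (auto simp: vw_def C_def T_def)
  also have "(\<Prod>x\<in>C. vw S r x (g x)) = (\<Prod>x\<in>T. vw S r x (g x)) * (\<Prod>x\<in>C - T. vw S r x (g x))"
    using prod.subset_diff[OF TC fC] by (simp add: mult.commute)
  also have "(\<Prod>x\<in>T. vw S r x (g x)) = (\<Prod>x\<in>T. r)"
    using TC by (intro prod.cong refl) (auto simp: vw_def C_def T_def)
  also have "(\<Prod>x\<in>C - T. vw S r x (g x)) = (\<Prod>x\<in>C - T. 1 - r)"
    by (intro prod.cong refl) (auto simp: vw_def C_def T_def)
  finally show ?thesis by (simp add: X_def C_def T_def)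
qed

lemma QA_nonneg: "0 \<le> r \<Longrightarrow> r \<le> 1 \<Longrightarrow> 0 \<le> QA n i S r"
  unfolding QA_def vw_def by (intro sum_nonneg mult_nonneg_nonneg prod_nonneg) auto

lemma QA_zero: "i \<notin> S \<Longrightarrow> QA n i S r = 0"
  unfolding QA_def by (intro sum.neutral) (auto simp: anc_def)

lemma QA_compare:
  assumes r: "0 < a'" "a' \<le> a" "a < 1" and S: "i \<in> S" "S \<subseteq> {..<n}"
  shows "(a / a') ^ (card S - 1) * ((1 - a) / (1 - a')) ^ (card S * n) * QA n i S a' \<le> QA n i S a"
proof -
  define \<kappa> where "\<kappa> = (a / a') ^ (card S - 1) * ((1 - a) / (1 - a')) ^ (card S * n)"
  have fS: "finite S" using S finite_subset by blast
  have "\<kappa> * QA n i S a' = (\<Sum>g\<in>GS n S. \<kappa> * ((\<Prod>x\<in>offdiag n. vw S a' x (g x)) *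
                   (if anc i {x\<in>offdiag n. g x} = S then 1 else 0)))"
    unfolding QA_def by (simp add: sum_distrib_left)
  also have "\<dots> \<le> QA n i S a"
    unfolding QA_def
  proof (rule sum_mono)
    fix g assume g: "g \<in> GS n S"
    show "\<kappa> * ((\<Prod>x\<in>offdiag n. vw S a' x (g x)) * (if anc i {x\<in>offdiag n. g x} = S then 1 else 0))
        \<le> (\<Prod>x\<in>offdiag n. vw S a x (g x)) * (if anc i {x\<in>offdiag n. g x} = S then 1 else 0)"
    proof (cases "anc i {x\<in>offdiag n. g x} = S")
      case False then show ?thesis by simp
    next
      case True
      define T where "T = {x\<in>offdiag n. g x}"
      define C where "C = {x\<in>offdiag n. fst x \<in> S}"
      define m where "m = card T"
      define M where "M = card (C - T)"
      have fT: "finite T" by (simp add: T_def)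
      have km: "card S - 1 \<le> m" using card_anc[OF fT, of i] True by (simp add: m_def T_def)
      have "C \<subseteq> S \<times> {..<n}" by (auto simp: C_def offdiag_def)
      then have "card C \<le> card (S \<times> {..<n})" using fS by (intro card_mono) auto
      then have "card C \<le> card S * n" by (simp add: card_cartesian_product)
      moreover have "M \<le> card C" unfolding M_def using fS
        by (intro card_mono) (auto simp: C_def)
      ultimately have Mk: "M \<le> card S * n" by linarith
      have e1: "(a/a') ^ (card S - 1) * a' ^ m \<le> a ^ m"
      proof -
        have "(a/a') ^ (card S - 1) \<le> (a/a') ^ m"
          using km r by (intro power_increasing) auto
        then have "(a/a') ^ (card S - 1) * a' ^ m \<le> (a/a') ^ m * a' ^ m"
          using r by (intro mult_right_mono) auto
        also have "\<dots> = a ^ m" using r by (simp add: power_divide)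
        finally show ?thesis .
      qed
      have e2: "((1 - a) / (1 - a')) ^ (card S * n) * (1 - a') ^ M \<le> (1 - a) ^ M"
      proof -
        have "((1 - a) / (1 - a')) ^ (card S * n) \<le> ((1 - a) / (1 - a')) ^ M"
          using Mk r by (intro power_decreasing) (auto simp: field_simps)
        then have "((1 - a) / (1 - a')) ^ (card S * n) * (1 - a') ^ M \<le> ((1 - a) / (1 - a')) ^ M * (1 - a') ^ M"
          using r by (intro mult_right_mono) auto
        also have "\<dots> = (1 - a) ^ M" using r by (simp add: power_divide)
        finally show ?thesis .
      qed
      have "\<kappa> * (a' ^ m * (1 - a') ^ M) = ((a/a') ^ (card S - 1) * a' ^ m) * (((1 - a) / (1 - a')) ^ (card S * n) * (1 - a') ^ M)"
        by (simp add: \<kappa>_def mult_ac)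
      also have "\<dots> \<le> a ^ m * (1 - a) ^ M"
        using e1 e2 r by (intro mult_mono) auto
      finally show ?thesis using True term_formula[OF g, of a'] term_formula[OF g, of a]
        by (simp add: T_def C_def m_def M_def)
    qed
  qed
  finally show ?thesis by (simp add: \<kappa>_def)
qed



lemma E3_cong:
  assumes "\<And>f. f \<in> Om n \<Longrightarrow> Z f = Z' f"
  shows "E3 n a b d Z = E3 n a b d Z'"
  unfolding E3_def using assms by (intro sum.cong refl) auto

definition Fam :: "nat \<Rightarrow> nat \<Rightarrow> nat set set" where
  "Fam n K = {S. S \<subseteq> {..<n} \<and> card S < K}"

lemma finite_Fam: "finite (Fam n K)"
  by (rule finite_subset[of _ "Pow {..<n}"]) (auto simp: Fam_def)

lemma decN_sub: "decN n f \<subseteq> offdiag n" by (auto simp: decN_def)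
lemma decD_sub: "decD n f \<subseteq> offdiag n" by (auto simp: decD_def)

lemma partition:
  assumes "i < n"
  shows "P3 n a b d (\<lambda>f. card (anc i (decN n f)) < K) = (\<Sum>S\<in>Fam n K. P3 n a b d (\<lambda>f. anc i (decN n f) = S))"
proof -
  have "(\<Sum>S\<in>Fam n K. P3 n a b d (\<lambda>f. anc i (decN n f) = S))
      = E3 n a b d (\<lambda>f. \<Sum>S\<in>Fam n K. if anc i (decN n f) = S then 1 else 0)"
    unfolding P3_def by (rule E3_sum[OF finite_Fam, symmetric])
  also have "\<dots> = P3 n a b d (\<lambda>f. card (anc i (decN n f)) < K)"
    unfolding P3_def
  proof (rule E3_cong)
    fix f
    have "anc i (decN n f) \<subseteq> {..<n}" using anc_offdiag[OF decN_sub assms] .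
    then have "(anc i (decN n f) \<in> Fam n K) = (card (anc i (decN n f)) < K)" by (simp add: Fam_def)
    then show "(\<Sum>S\<in>Fam n K. if anc i (decN n f) = S then 1 else 0) = (if card (anc i (decN n f)) < K then 1 else (0::real))"
      using finite_Fam by (simp add: sum.delta)
  qed
  finally show ?thesis ..
qed

lemma A_lower:
  assumes i: "i < n" and r: "0 < a'" "a' \<le> a" "a < 1" and abd: "a + b + d = 1"
    and mu: "0 \<le> \<mu>" "\<And>k. 1 \<le> k \<Longrightarrow> k < K \<Longrightarrow> \<mu> \<le> (a / a') ^ (k - 1) * ((1 - a) / (1 - a')) ^ (k * n)"
  shows "\<mu> * P3 n a' 0 (1 - a') (\<lambda>f. card (anc i (decN n f)) < K) \<le> P3 n a b d (\<lambda>f. card (anc i (decN n f)) < K)"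
proof -
  have "\<mu> * P3 n a' 0 (1 - a') (\<lambda>f. card (anc i (decN n f)) < K) = (\<Sum>S\<in>Fam n K. \<mu> * QA n i S a')"
    unfolding partition[OF i] by (simp add: A_map sum_distrib_left)
  also have "\<dots> \<le> (\<Sum>S\<in>Fam n K. QA n i S a)"
  proof (rule sum_mono)
    fix S assume S: "S \<in> Fam n K"
    show "\<mu> * QA n i S a' \<le> QA n i S a"
    proof (cases "i \<in> S")
      case False then show ?thesis by (simp add: QA_zero)
    next
      case True
      have fS: "finite S" using S finite_subset by (auto simp: Fam_def)
      then have k1: "1 \<le> card S" using True by (metis One_nat_def Suc_leI card_gt_0_iff empty_iff)
      have kK: "card S < K" using S by (simp add: Fam_def)
      have "\<mu> * QA n i S a' \<le> ((a / a') ^ (card S - 1) * ((1 - a) / (1 - a')) ^ (card S * n)) * QA n i S a'"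
        using mu(2)[OF k1 kK] QA_nonneg[of a'] r by (intro mult_right_mono) auto
      also have "\<dots> \<le> QA n i S a" using QA_compare[OF r True] S by (simp add: Fam_def)
      finally show ?thesis .
    qed
  qed
  also have "\<dots> = P3 n a b d (\<lambda>f. card (anc i (decN n f)) < K)"
    unfolding partition[OF i] using abd by (simp add: A_map)
  finally show ?thesis .
qed

lemma anc_card_paths:
  assumes "i < n"
  shows "card (anc i (decN n f)) \<le> card {xs\<in>paths n i n. epairs xs \<subseteq> decN n f}"
proof -
  have sub: "anc i (decN n f) \<subseteq> hd ` {xs\<in>paths n i n. epairs xs \<subseteq> decN n f}"
  proof
    fix m assume m: "m \<in> anc i (decN n f)"
    obtain xs where xs: "distinct xs" "xs \<noteq> []" "hd xs = m" "last xs = i" "epairs xs \<subseteq> decN n f"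
      using anc_path[OF m] by blast
    have "set xs \<subseteq> {..<n}" using path_anc[OF xs(5,2,4)] anc_offdiag[OF decN_sub assms] by blast
    moreover then have "length xs \<le> n" using xs(1) distinct_card[OF xs(1)] card_mono[of "{..<n}" "set xs"] by simp
    ultimately have "xs \<in> {xs\<in>paths n i n. epairs xs \<subseteq> decN n f}" using xs by (simp add: paths_def)
    then show "m \<in> hd ` {xs\<in>paths n i n. epairs xs \<subseteq> decN n f}" using xs(3) by blast
  qed
  have "card (anc i (decN n f)) \<le> card (hd ` {xs\<in>paths n i n. epairs xs \<subseteq> decN n f})"
    using sub by (intro card_mono) auto
  also have "\<dots> \<le> card {xs\<in>paths n i n. epairs xs \<subseteq> decN n f}" by (intro card_image_le) auto
  finally show ?thesis .
qed

lemma A_markov: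
  assumes i: "i < n" and r: "0 \<le> a'" "a' \<le> 1" and K: "0 < K"
  shows "P3 n a' 0 (1 - a') (\<lambda>f. real K \<le> real (card (anc i (decN n f)))) \<le> (\<Sum>l\<le>n. (real n * a') ^ l) / real K"
proof -
  define Z where "Z f = real (card {xs\<in>paths n i n. epairs xs \<subseteq> decN n f})" for f
  have "P3 n a' 0 (1 - a') (\<lambda>f. real K \<le> real (card (anc i (decN n f)))) \<le> P3 n a' 0 (1 - a') (\<lambda>f. real K \<le> Z f)"
    using r anc_card_paths[OF i] unfolding Z_def by (intro P3_mono) (auto intro: order_trans)
  also have "\<dots> \<le> E3 n a' 0 (1 - a') Z / real K"
    using r K by (intro P3_markov) (auto simp: Z_def)
  also have "E3 n a' 0 (1 - a') Z = (\<Sum>xs\<in>paths n i n. P3 n a' 0 (1 - a') (\<lambda>f. epairs xs \<subseteq> decN n f))"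
    unfolding Z_def by (rule E3_card) simp
  also have "\<dots> = (\<Sum>xs\<in>paths n i n. a' ^ (length xs - 1))"
    by (intro sum.cong refl P3_path) auto
  also have "\<dots> \<le> (\<Sum>l\<le>n. (real n * a') ^ l)" using r by (intro sum_paths_le) auto
  finally show ?thesis using K by (simp add: divide_right_mono)
qed

definition Ycnt :: "nat \<Rightarrow> nat \<Rightarrow> nat \<Rightarrow> (nat \<times> nat) set \<Rightarrow> (nat \<times> nat) set \<Rightarrow> nat" where
  "Ycnt n i K D N = card {y\<in>paths n i K \<times> {..<n}. epairs (fst y) \<subseteq> N \<and> (hd (fst y), snd y) \<in> D}"

lemma Y_markov:
  assumes r: "0 \<le> a" "0 \<le> b" "0 \<le> d" "a + b + d = 1" and t: "0 < t"
  shows "P3 n a b d (\<lambda>f. t \<le> real (Ycnt n i K (decD n f) (decN n f)))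
       \<le> real n * (a + b) * (\<Sum>l\<le>K. (real n * a) ^ l) / t"
proof -
  have "P3 n a b d (\<lambda>f. t \<le> real (Ycnt n i K (decD n f) (decN n f)))
      \<le> E3 n a b d (\<lambda>f. real (Ycnt n i K (decD n f) (decN n f))) / t"
    using r t by (intro P3_markov) auto
  also have "E3 n a b d (\<lambda>f. real (Ycnt n i K (decD n f) (decN n f)))
      = (\<Sum>y\<in>paths n i K \<times> {..<n}. P3 n a b d (\<lambda>f. epairs (fst y) \<subseteq> decN n f \<and> (hd (fst y), snd y) \<in> decD n f))"
    unfolding Ycnt_def by (rule E3_card) simp
  also have "\<dots> \<le> (\<Sum>y\<in>paths n i K \<times> {..<n}. a ^ (length (fst y) - 1) * (a + b))"
    using r by (intro sum_mono P3_path_D) auto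
  also have "\<dots> = (\<Sum>(xs,j)\<in>paths n i K \<times> {..<n}. a ^ (length xs - 1) * (a + b))"
    by (simp add: case_prod_beta)
  also have "\<dots> = (\<Sum>xs\<in>paths n i K. \<Sum>j<n. a ^ (length xs - 1) * (a + b))"
    by (rule sum.cartesian_product[symmetric])
  also have "\<dots> = real n * (a + b) * (\<Sum>xs\<in>paths n i K. a ^ (length xs - 1))"
    by (simp add: sum_distrib_left mult_ac)
  also have "\<dots> \<le> real n * (a + b) * (\<Sum>l\<le>K. (real n * a) ^ l)"
    using r by (intro mult_left_mono sum_paths_le) auto
  finally show ?thesis using t by (simp add: divide_right_mono)
qed

lemma learned_bound:
  assumes i: "i < n" and DN: "D \<subseteq> offdiag n" "N \<subseteq> offdiag n" and K: "card (anc i N) < K"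
  shows "card (learned i (I, D, N)) \<le> Ycnt n i K D N"
proof -
  define Y where "Y = {y\<in>paths n i K \<times> {..<n}. epairs (fst y) \<subseteq> N \<and> (hd (fst y), snd y) \<in> D}"
  have fY: "finite Y" unfolding Y_def by (rule finite_subset[of _ "paths n i K \<times> {..<n}"]) auto
  have sub: "learned i (I, D, N) \<subseteq> snd ` Y"
  proof
    fix j assume "j \<in> learned i (I, D, N)"
    then obtain m where m: "m = i \<or> (m,i) \<in> (ind_net N)\<^sup>+" "(m,j) \<in> D"
      by (auto simp: learned_def)
    have ma: "m \<in> anc i N" using m(1) by (simp add: anc_def)
    obtain xs where xs: "distinct xs" "xs \<noteq> []" "hd xs = m" "last xs = i" "epairs xs \<subseteq> N"
      using anc_path[OF ma] by blast
    have sa: "set xs \<subseteq> anc i N" using path_anc[OF xs(5,2,4)] .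
    have "set xs \<subseteq> {..<n}" using sa anc_offdiag[OF DN(2) i] by blast
    moreover have "length xs \<le> K"
    proof -
      have "finite (anc i N)" using anc_offdiag[OF DN(2) i] finite_subset by blast
      then have "card (set xs) \<le> card (anc i N)" using sa by (intro card_mono) auto
      then show ?thesis using distinct_card[OF xs(1)] K by simp
    qed
    moreover have "j < n" using m(2) DN(1) by (auto simp: offdiag_def)
    ultimately have "(xs, j) \<in> Y" using xs m(2) by (simp add: Y_def paths_def)
    then show "j \<in> snd ` Y" by force
  qed
  have "card (learned i (I, D, N)) \<le> card (snd ` Y)" using sub fY by (intro card_mono) auto
  also have "\<dots> \<le> card Y" using fY by (rule card_image_le)
  finally show ?thesis by (simp add: Ycnt_def Y_def)
qed



lemma exp_pow_bound:
  fixes u :: real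
  assumes "0 \<le> u" "u < 1"
  shows "exp (- (real m * (u / (1 - u)))) \<le> (1 - u) ^ m"
proof -
  have "1 / (1 - u) = 1 + u / (1 - u)" using assms by (simp add: field_simps)
  also have "\<dots> \<le> exp (u / (1 - u))" by (rule exp_ge_add_one_self)
  finally have "1 / (1 - u) \<le> exp (u / (1 - u))" .
  then have h: "exp (- (u / (1 - u))) \<le> 1 - u" using assms
    by (simp add: exp_minus field_simps)
  have "exp (- (real m * (u / (1 - u)))) = exp (- (u / (1 - u))) ^ m"
    by (simp add: exp_of_nat_mult[symmetric])
  also have "\<dots> \<le> (1 - u) ^ m" using h by (intro power_mono) auto
  finally show ?thesis .
qed

lemma ratio_bound:
  fixes a a' :: real
  assumes "0 < a'" "a' \<le> a" "a < 1"
  shows "(a/a')^(k-1) * exp (- (real (k*n) * ((a - a') / (1 - a)))) \<le> (a/a')^(k-1) * ((1 - a)/(1 - a'))^(k*n)"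
proof -
  define u where "u = (a - a') / (1 - a')"
  have u: "0 \<le> u" "u < 1" using assms by (auto simp: u_def field_simps)
  have e1: "1 - u = (1 - a) / (1 - a')" using assms by (simp add: u_def field_simps)
  have p: "0 < 1 - a" "0 < 1 - a'" using assms by auto
  have e2: "u / ((1 - a) / (1 - a')) = (a - a') / (1 - a)" unfolding u_def using p by (simp add: divide_divide_eq_left')
  have h: "exp (- (real (k*n) * ((a - a') / (1 - a)))) \<le> ((1 - a)/(1 - a'))^(k*n)"
    using exp_pow_bound[OF u, of "k*n"] by (simp only: e1 e2)
  show ?thesis using h assms by (intro mult_left_mono) auto
qed

lemma ell_ge:
  fixes c :: real
  assumes "0 < c" "c < 1" "1 \<le> k"
  shows "c \<le> (1/c)^(k-1) * exp (- (real k * ((1 - c) / (1 - 0))))"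
proof -
  have "c \<le> exp (c - 1)" using exp_ge_add_one_self[of "c - 1"] by simp
  then have "c ^ k \<le> exp (c - 1) ^ k" using assms by (intro power_mono) auto
  also have "exp (c - 1) ^ k = exp (- (real k * ((1 - c) / (1 - 0))))"
    by (simp add: exp_of_nat_mult[symmetric] algebra_simps)
  finally have h: "c ^ k \<le> exp (- (real k * ((1 - c) / (1 - 0))))" .
  obtain j where kj: "k = Suc j" using assms(3) by (cases k) auto
  have "(1/c)^(k-1) * c ^ k = c * ((1/c)^j * c ^ j)" by (simp add: kj mult_ac)
  also have "(1/c)^j * c ^ j = ((1/c) * c) ^ j" by (rule power_mult_distrib[symmetric])
  also have "\<dots> = 1" using assms by simp
  finally have "c = (1/c)^(k-1) * c ^ k" by simp
  also have "\<dots> \<le> (1/c)^(k-1) * exp (- (real k * ((1 - c) / (1 - 0))))"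
    using h assms by (intro mult_left_mono) auto
  finally show ?thesis .
qed



theorem mainTheorem14:
  fixes \<delta> :: real and p q \<omega> :: "nat \<Rightarrow> real" and i :: "nat \<Rightarrow> nat"
  assumes "0 < \<delta>" "\<delta> \<le> 1"
    and "\<And>n. 0 < p n \<and> p n < 1"
    and "\<And>n. 0 \<le> q n \<and> q n \<le> 1"
    and critical: "(\<lambda>n. \<delta> * iota (q n) (q n) * real n) \<longlonglongrightarrow> 1"
    and "filterlim \<omega> at_top sequentially"
    and "\<And>n. n \<ge> 2 \<Longrightarrow> i n < n"
  shows "(\<lambda>n. prob_event n (p n) (q n) \<delta>
                (\<lambda>\<omega>'. real (card (learned (i n) \<omega>')) > \<omega> n)) \<longlonglongrightarrow> 0"
proof -
  note dl = assms(1,2) and pr = assms(3) and qr = assms(4) and om = assms(6) and ii = assms(7)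
  define a where "a n = q n * q n * \<delta>" for n
  define b where "b n = q n * q n * (1 - \<delta>)" for n
  define d where "d n = 1 - q n * q n" for n
  define cn where "cn n = \<delta> * iota (q n) (q n) * real n" for n
  define P where "P n = prob_event n (p n) (q n) \<delta> (\<lambda>\<omega>'. real (card (learned (i n) \<omega>')) > \<omega> n)" for n
  have cn_eq: "cn n = a n * real n" for n by (simp add: cn_def a_def iota_def mult_ac)
  have crit: "cn \<longlonglongrightarrow> 1" using critical unfolding cn_def .
  have abd: "a n + b n + d n = 1" for n by (simp add: a_def b_def d_def algebra_simps)
  have qq: "0 \<le> q n * q n" "q n * q n \<le> 1" for n using qr[of n] by (auto simp: mult_le_one)
  have a0: "0 \<le> a n" "0 \<le> b n" "0 \<le> d n" for n using qq[of n] dl by (auto simp: a_def b_def d_def)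
  have P0: "0 \<le> P n" for n
    unfolding P_def prob_event_def using pr[of n] qr[of n] dl
    by (intro sum_nonneg weight_nonneg) auto
  have cn_div: "(\<lambda>n. cn n / real n) \<longlonglongrightarrow> 0"
  proof -
    have "(\<lambda>n. cn n * inverse (real n)) \<longlonglongrightarrow> 1 * 0" by (intro tendsto_mult crit lim_inverse_n)
    then show ?thesis by (simp add: divide_inverse)
  qed
  show ?thesis unfolding P_def[symmetric]
  proof (rule tendstoI)
    fix \<epsilon> :: real assume \<epsilon>: "0 < \<epsilon>"
    define e where "e = min \<epsilon> 1 / 8"
    have e: "0 < e" "e \<le> 1/8" "8 * e \<le> \<epsilon>" using \<epsilon> by (auto simp: e_def)
    define c where "c = 1 - e"
    have c: "0 < c" "c < 1" using e by (auto simp: c_def)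
    define K where "K = nat \<lceil>1 / (e * e)\<rceil> + 2"
    have K2: "2 \<le> K" by (simp add: K_def)
    have Ke: "1 / (e * e) \<le> real K" unfolding K_def by linarith
    define M where "M = (2 / \<delta>) * (real K + 1) * 2 ^ K"
    have M0: "0 < M" using dl by (simp add: M_def)
    define L where "L n k = (cn n / c) ^ (k - 1) * exp (- (real k * ((cn n - c) / (1 - cn n / real n))))" for n k
    have evL: "eventually (\<lambda>n. \<forall>k\<in>{1..<K}. c * c < L n k) sequentially"
    proof (rule eventually_ball_finite)
      show "finite {1..<K}" by simp
      show "\<forall>k\<in>{1..<K}. eventually (\<lambda>n. c * c < L n k) sequentially"
      proof
        fix k assume k: "k \<in> {1..<K}"
        have lim: "(\<lambda>n. L n k) \<longlonglongrightarrow> (1/c) ^ (k - 1) * exp (- (real k * ((1 - c) / (1 - 0))))"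
          unfolding L_def using c by (intro tendsto_intros crit cn_div) auto
        have "c * c < c" using c by simp
        also have "c \<le> (1/c) ^ (k - 1) * exp (- (real k * ((1 - c) / (1 - 0))))" using ell_ge[OF c] k by auto
        finally show "eventually (\<lambda>n. c * c < L n k) sequentially" using order_tendstoD(1)[OF lim] by auto
      qed
    qed
    have ev2: "eventually (\<lambda>n. c < cn n) sequentially" using order_tendstoD(1)[OF crit c(2)] .
    have ev3: "eventually (\<lambda>n. cn n < 2) sequentially" using order_tendstoD(2)[OF crit] by simp
    have ev5: "eventually (\<lambda>n. M / e \<le> \<omega> n) sequentially" using om by (simp add: filterlim_at_top)
    have ev1: "eventually (\<lambda>n. 2 \<le> n) sequentially" by (rule eventually_ge_at_top)
    show "eventually (\<lambda>n. dist (P n) 0 < \<epsilon>) sequentially"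
      using evL ev2 ev3 ev5 ev1
    proof eventually_elim
      case (elim n)
      then have hL: "\<forall>k\<in>{1..<K}. c * c < L n k" and hc: "c < cn n" "cn n < 2"
        and ho: "M / e \<le> \<omega> n" and hn: "2 \<le> n" by auto
      define m where "m = i n"
      have im: "m < n" using ii hn by (simp add: m_def)
      define a' where "a' = c / real n"
      have rn: "2 \<le> real n" using hn by simp
      have an: "a n = cn n / real n" using rn by (simp add: cn_eq)
      have r: "0 < a'" "a' \<le> a n" "a n < 1"
      proof -
        show "0 < a'" using c rn by (simp add: a'_def)
        show "a' \<le> a n" unfolding an a'_def using hc rn by (intro divide_right_mono) auto
        have "cn n / real n < 2 / real n" using hc rn by (intro divide_strict_right_mono) auto
        also have "\<dots> \<le> 1" using rn by simp
        finally show "a n < 1" unfolding an .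
      qed
      have t: "0 < \<omega> n" using ho M0 e(1) by (meson divide_pos_pos less_le_trans)
      define E' where "E' D N = (real K \<le> real (card (anc m N)) \<or> \<omega> n \<le> real (Ycnt n m K D N))" for D N
      have s1: "P n \<le> prob_event n (p n) (q n) \<delta> (\<lambda>\<omega>. E' (fst (snd \<omega>)) (snd (snd \<omega>)))"
        unfolding P_def
      proof (rule prob_event_mono)
        show "0 \<le> p n" "p n \<le> 1" "0 \<le> q n" "q n \<le> 1" "0 \<le> \<delta>" "\<delta> \<le> 1" using pr[of n] qr[of n] dl by auto
      next
        fix w assume w: "w \<in> outcomes n" and lw: "\<omega> n < real (card (learned (i n) w))"
        obtain I D N where wd: "w = (I, D, N)" "D \<subseteq> offdiag n" "N \<subseteq> D"
          using w by (auto simp: outcomes_def)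
        show "E' (fst (snd w)) (snd (snd w))"
        proof (cases "card (anc m N) < K")
          case True
          have "card (learned m (I, D, N)) \<le> Ycnt n m K D N"
            using learned_bound[OF im wd(2) _ True] wd(2,3) by auto
          then show ?thesis using lw wd(1) by (simp add: E'_def m_def)
        next
          case False then show ?thesis using wd(1) by (simp add: E'_def)
        qed
      qed
      have s2: "prob_event n (p n) (q n) \<delta> (\<lambda>\<omega>. E' (fst (snd \<omega>)) (snd (snd \<omega>)))
          = P3 n (a n) (b n) (d n) (\<lambda>f. E' (decD n f) (decN n f))"
        unfolding prob_event_enc a_def b_def d_def ..
      have s3: "P3 n (a n) (b n) (d n) (\<lambda>f. E' (decD n f) (decN n f))
          \<le> P3 n (a n) (b n) (d n) (\<lambda>f. real K \<le> real (card (anc m (decN n f))))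
            + P3 n (a n) (b n) (d n) (\<lambda>f. \<omega> n \<le> real (Ycnt n m K (decD n f) (decN n f)))"
        unfolding E'_def by (rule P3_disj) (use a0 in auto)
      have notle: "\<And>aa bb dd. aa + bb + dd = 1 \<Longrightarrow> P3 n aa bb dd (\<lambda>f. card (anc m (decN n f)) < K)
           = 1 - P3 n aa bb dd (\<lambda>f. real K \<le> real (card (anc m (decN n f))))"
      proof -
        fix aa bb dd :: real assume h: "aa + bb + dd = 1"
        have "P3 n aa bb dd (\<lambda>f. card (anc m (decN n f)) < K) = P3 n aa bb dd (\<lambda>f. \<not> (real K \<le> real (card (anc m (decN n f)))))"
          by (intro P3_cong) auto
        then show "P3 n aa bb dd (\<lambda>f. card (anc m (decN n f)) < K)
           = 1 - P3 n aa bb dd (\<lambda>f. real K \<le> real (card (anc m (decN n f))))" using P3_not[OF h] by simp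
      qed
      define G where "G = (\<Sum>l\<le>n. (real n * a') ^ l)"
      have Gle: "G \<le> 1 / e"
      proof -
        have na: "real n * a' = c" using rn by (simp add: a'_def)
        have "G = (\<Sum>l<Suc n. c ^ l)" unfolding G_def na by (simp add: lessThan_Suc_atMost)
        also have "\<dots> = (1 - c ^ Suc n) / (1 - c)" by (simp only: sum_gp_strict) (use c in simp)
        also have "\<dots> \<le> 1 / (1 - c)" using c by (intro divide_right_mono) auto
        finally show ?thesis by (simp add: c_def)
      qed
      have G0: "0 \<le> G" unfolding G_def using r rn by (intro sum_nonneg) auto
      have Amk: "P3 n a' 0 (1 - a') (\<lambda>f. real K \<le> real (card (anc m (decN n f)))) \<le> G / real K"
        unfolding G_def using A_markov[OF im, of a' K] r K2 by auto
      have mu: "\<And>k. 1 \<le> k \<Longrightarrow> k < K \<Longrightarrow> c * c \<le> (a n / a') ^ (k - 1) * ((1 - a n) / (1 - a')) ^ (k * n)"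
      proof -
        fix k assume k: "1 \<le> k" "k < K"
        have nz: "1 - cn n / real n \<noteq> 0" using r(3) unfolding an by linarith
        have q1: "a n / a' = cn n / c" using rn c by (simp add: an a'_def)
        have q2: "real (k * n) * ((a n - a') / (1 - a n)) = real k * ((cn n - c) / (1 - cn n / real n))"
        proof -
          have "a n - a' = (cn n - c) / real n" by (simp add: an a'_def diff_divide_distrib)
          then have "real (k * n) * ((a n - a') / (1 - a n)) = real k * (real n * ((cn n - c) / real n)) / (1 - cn n / real n)"
            by (simp add: an)
          also have "real n * ((cn n - c) / real n) = cn n - c" using rn by simp
          finally show ?thesis by simp
        qed
        have "c * c < L n k" using hL k by auto
        also have "L n k = (a n / a') ^ (k - 1) * exp (- (real (k * n) * ((a n - a') / (1 - a n))))"
          unfolding L_def q1 q2 ..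
        also have "\<dots> \<le> (a n / a') ^ (k - 1) * ((1 - a n) / (1 - a')) ^ (k * n)"
          by (rule ratio_bound[OF r])
        finally show "c * c \<le> (a n / a') ^ (k - 1) * ((1 - a n) / (1 - a')) ^ (k * n)" by simp
      qed
      have low: "c * c * P3 n a' 0 (1 - a') (\<lambda>f. card (anc m (decN n f)) < K)
          \<le> P3 n (a n) (b n) (d n) (\<lambda>f. card (anc m (decN n f)) < K)"
        by (rule A_lower[OF im r abd]) (use mu in auto)
      have sA: "P3 n (a n) (b n) (d n) (\<lambda>f. real K \<le> real (card (anc m (decN n f)))) \<le> 3 * e"
      proof -
        have "P3 n (a n) (b n) (d n) (\<lambda>f. real K \<le> real (card (anc m (decN n f))))
            = 1 - P3 n (a n) (b n) (d n) (\<lambda>f. card (anc m (decN n f)) < K)" using notle[OF abd] by simp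
        also have "\<dots> \<le> 1 - c * c * P3 n a' 0 (1 - a') (\<lambda>f. card (anc m (decN n f)) < K)" using low by simp
        also have "P3 n a' 0 (1 - a') (\<lambda>f. card (anc m (decN n f)) < K)
            = 1 - P3 n a' 0 (1 - a') (\<lambda>f. real K \<le> real (card (anc m (decN n f))))" by (rule notle) simp
        also have "1 - c * c * (1 - P3 n a' 0 (1 - a') (\<lambda>f. real K \<le> real (card (anc m (decN n f)))))
            \<le> 1 - c * c * (1 - G / real K)"
          using Amk c by (intro diff_left_mono mult_left_mono) auto
        also have "\<dots> = (1 - c * c) + c * c * (G / real K)" by (simp add: algebra_simps)
        also have "\<dots> \<le> 2 * e + 1 * (G / real K)"
        proof (intro add_mono mult_right_mono)
          show "1 - c * c \<le> 2 * e" using e by (simp add: c_def algebra_simps)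
          show "c * c \<le> 1" using c by (simp add: mult_le_one)
          show "0 \<le> G / real K" using G0 by simp
        qed
        also have "G / real K \<le> (1 / e) / real K" using Gle K2 by (intro divide_right_mono) auto
        also have "(1 / e) / real K \<le> e"
        proof -
          have "1 \<le> e * e * real K" using Ke e by (simp add: field_simps)
          then show ?thesis using e K2 by (simp add: field_simps)
        qed
        finally show ?thesis by simp
      qed
      have sY: "P3 n (a n) (b n) (d n) (\<lambda>f. \<omega> n \<le> real (Ycnt n m K (decD n f) (decN n f))) \<le> e"
      proof -
        have "P3 n (a n) (b n) (d n) (\<lambda>f. \<omega> n \<le> real (Ycnt n m K (decD n f) (decN n f)))
            \<le> real n * (a n + b n) * (\<Sum>l\<le>K. (real n * a n) ^ l) / \<omega> n"
          by (rule Y_markov[OF a0 abd t])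
        also have "real n * (a n + b n) * (\<Sum>l\<le>K. (real n * a n) ^ l) \<le> M"
        proof -
          have e1: "real n * (a n + b n) = cn n / \<delta>" using dl by (simp add: cn_def a_def b_def iota_def field_simps)
          have e2: "real n * (a n + b n) \<le> 2 / \<delta>" unfolding e1 using hc dl by (intro divide_right_mono) auto
          have "(\<Sum>l\<le>K. (real n * a n) ^ l) \<le> (\<Sum>l\<le>K. (2::real) ^ K)"
          proof (rule sum_mono)
            fix l assume l: "l \<in> {..K}"
            have "(real n * a n) ^ l \<le> 2 ^ l" using hc cn_eq[of n] a0[of n]
              by (intro power_mono) (auto simp: mult.commute)
            also have "(2::real) ^ l \<le> 2 ^ K" using l by (intro power_increasing) auto
            finally show "(real n * a n) ^ l \<le> 2 ^ K" .
          qed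
          also have "\<dots> = (real K + 1) * 2 ^ K" by simp
          finally have e3: "(\<Sum>l\<le>K. (real n * a n) ^ l) \<le> (real K + 1) * 2 ^ K" .
          have "real n * (a n + b n) * (\<Sum>l\<le>K. (real n * a n) ^ l) \<le> (2 / \<delta>) * ((real K + 1) * 2 ^ K)"
            using e2 e3 a0[of n] dl by (intro mult_mono) (auto intro: sum_nonneg)
          moreover have "(2 / \<delta>) * ((real K + 1) * 2 ^ K) = M" by (simp add: M_def mult.assoc)
          ultimately show ?thesis by linarith
        qed
        then have "real n * (a n + b n) * (\<Sum>l\<le>K. (real n * a n) ^ l) / \<omega> n \<le> M / \<omega> n"
          using t by (intro divide_right_mono) auto
        also have "M / \<omega> n \<le> e" using ho t e(1) by (simp add: field_simps)
        finally show ?thesis .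
      qed
      have "P n \<le> 3 * e + e" using s1 s2 s3 sA sY by linarith
      then have "P n < \<epsilon>" using e by linarith
      then show "dist (P n) 0 < \<epsilon>" using P0[of n] by simp
    qed
  qed
qed


end
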